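(* Under the Setting and Algorithm described in the context, suppose $\{x_k\}_{k\ge1}$ is generated by the inexact CSA algorithm with policy (P1). Then for any $N\ge1$, $$f(\bar x_{N,s})-f(x^* )\le \frac{6D_{\mathcal X}(L_f+L_{g,\mathcal X})}{\sqrt N},$$ and $$G(\bar x_{N,s})\le \frac{12D_{\mathcal X}(L_f+L_{g,\mathcal X})}{\sqrt N}+\frac{\sum_{k\in\mathcal B}\varepsilon_k/\sqrt k}{\sum_{k\in\mathcal B}1/\sqrt k}.$$
   Context: Setting. $\mathcal X\subset\mathbb R^n$ is convex and compact; $f:\mathcal X\to\mathbb R$ is convex and $L_f$-Lipschitz; $\Delta\subset\mathbb R^d$ is compact; $g:\mathcal X\times\Delta\to\mathbb R$ is such that for every $\delta\in\Delta$, $x\mapsto g(x,\delta)$ is convex and $L_{g,\mathcal X}$-Lipschitz, and for every $x\in\mathcal X$, $\delta\mapsto g(x,\delta)$ is $L_{g,\Delta}$-Lipschitz. Let $G(x):=\max_{\delta\in\Delta}g(x,\delta)$ and assume the problem $\min_{x\in\mathcal X}\{f(x):G(x)\le0\}$ has an optimal solution $x^*$. Norms are Euclidean. $f'(x)$ denotes a subgradient of $f$ at $x$ and $g'(x,\delta)$ a subgradient of $g(\cdot,\delta)$ at $x$. Let $\omega_{\mathcal X}:\mathcal X\to\mathbb R$ be continuously differentiable and $1$-strongly convex; $V(x,z):=\omega_{\mathcal X}(z)-\omega_{\mathcal X}(x)-\langle\nabla\omega_{\mathcal X}(x),z-x\rangle$; prox-mapping $P_{x,\mathcal X}(y):=\arg\min_{z\in\mathcal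 X}\{\langle y,z\rangle+V(x,z)\}$; $D_{\mathcal X}:=\sqrt{\max_{x,z\in\mathcal X}V(x,z)}$. Algorithm (inexact CSA). Inputs: $N\ge1$, $x_1\in\mathcal X$, tolerances $\eta_k>0$, step-sizes $\gamma_k>0$. For $k=1,\dots,N$: choose some $\delta_k\in\Delta$ (an approximate maximizer of $g(x_k,\cdot)$); set $h_k=f'(x_k)$ if $g(x_k,\delta_k)\le\eta_k$ and $h_k=g'(x_k,\delta_k)$ otherwise; set $x_{k+1}=P_{x_k,\mathcal X}(\gamma_kh_k)$. For $1\le s\le N$ let $I=\{s,\dots,N\}$, $\mathcal B:=\{k\in I: g(x_k,\delta_k)\le\eta_k\}$, $\mathcal N:=I\setminus\mathcal B$, and output $\bar x_{N,s}:=\sum_{k\in\mathcal B}\gamma_kx_k/\sum_{k\in\mathcal B}\gamma_k$. The cut-generation errors are $\varepsilon_k:=G(x_k)-g(x_k,\delta_k)\ge0$. Policy (P1): $\eta_k=\frac{6(L_f+L_{g,\mathcal X})D_{\mathcal X}}{\sqrt k}$, $\gamma_k=\frac{D_{\mathcal X}}{\sqrt k(L_f+L_{g,\mathcal X})}$ for $k=1,\dots,N$, and $s=\lceil N/2\rceil$. *)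

theory Defs
  imports "HOL-Analysis.Analysis"
begin

definition is_subgradient :: "('a::real_inner \<Rightarrow> real) \<Rightarrow> 'a set \<Rightarrow> 'a \<Rightarrow> 'a \<Rightarrow> bool" where
  "is_subgradient f S x s \<longleftrightarrow> (\<forall>z\<in>S. f z \<ge> f x + inner s (z - x))"

definition strongly_convex_on :: "'a::real_normed_vector set \<Rightarrow> real \<Rightarrow> ('a \<Rightarrow> real) \<Rightarrow> bool" where
  "strongly_convex_on S c w \<longleftrightarrow> convex S \<and>
    (\<forall>x\<in>S. \<forall>y\<in>S. \<forall>t\<in>{0..1}.
        w ((1 - t) *\<^sub>R x + t *\<^sub>R y) \<le> (1 - t) * w x + t * w y - c / 2 * t * (1 - t) * (norm (x - y))\<^sup>2)"

definition C1_on_with_gradient :: "'a::real_inner set \<Rightarrow> ('a \<Rightarrow> real) \<Rightarrow> ('a \<Rightarrow> 'a) \<Rightarrow> bool" where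
  "C1_on_with_gradient S w gw \<longleftrightarrow>
     (\<forall>x\<in>S. (w has_derivative (\<lambda>h. inner (gw x) h)) (at x within S)) \<and> continuous_on S gw"

definition bregman :: "('a::real_inner \<Rightarrow> real) \<Rightarrow> ('a \<Rightarrow> 'a) \<Rightarrow> 'a \<Rightarrow> 'a \<Rightarrow> real" where
  "bregman w gw x z = w z - w x - inner (gw x) (z - x)"

definition is_prox :: "('a::real_inner \<Rightarrow> real) \<Rightarrow> ('a \<Rightarrow> 'a) \<Rightarrow> 'a set \<Rightarrow> 'a \<Rightarrow> 'a \<Rightarrow> 'a \<Rightarrow> bool" where
  "is_prox w gw S x y x' \<longleftrightarrow> x' \<in> S \<and>
     (\<forall>z\<in>S. inner y x' + bregman w gw x x' \<le> inner y z + bregman w gw x z)"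

definition diamD :: "('a::real_inner \<Rightarrow> real) \<Rightarrow> ('a \<Rightarrow> 'a) \<Rightarrow> 'a set \<Rightarrow> real" where
  "diamD w gw S = sqrt (Sup ((\<lambda>(x, z). bregman w gw x z) ` (S \<times> S)))"

definition Gmax :: "('a \<Rightarrow> 'b \<Rightarrow> real) \<Rightarrow> 'b set \<Rightarrow> 'a \<Rightarrow> real" where
  "Gmax g D x = Sup (g x ` D)"

end

theory Submission
  imports Defs
begin

lemma dir_deriv:
  fixes X :: "'a::real_inner set"
  assumes C1: "C1_on_with_gradient X w gw" and cX: "convex X" and x: "x\<in>X" and z: "z\<in>X"
  shows "((\<lambda>t. (w (x + t *\<^sub>R (z - x)) - w x) / t) \<longlongrightarrow> inner (gw x) (z - x)) (at_right 0)"
proof -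
  define p where "p = (\<lambda>t::real. x + t *\<^sub>R (z - x))"
  have p: "(p has_derivative (\<lambda>t. t *\<^sub>R (z-x))) (at 0 within {0..1})"
    unfolding p_def by (auto intro!: derivative_eq_intros)
  have sub: "p ` {0..1} \<subseteq> X"
  proof
    fix y assume "y \<in> p ` {0..1}"
    then obtain t where t: "t \<in> {0..1}" "y = p t" by auto
    have "y = (1 - t) *\<^sub>R x + t *\<^sub>R z" using t by (simp add: p_def algebra_simps)
    then show "y \<in> X" using cX x z t by (simp add: convex_alt)
  qed
  have "(w has_derivative (\<lambda>h. inner (gw x) h)) (at x within X)"
    using C1 x by (simp add: C1_on_with_gradient_def)
  then have w: "(w has_derivative (\<lambda>h. inner (gw x) h)) (at (p 0) within p ` {0..1})"
    using sub by (auto simp: p_def intro: has_derivative_subset)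
  have "((w \<circ> p) has_derivative ((\<lambda>h. inner (gw x) h) \<circ> (\<lambda>t. t *\<^sub>R (z-x)))) (at 0 within {0..1})"
    by (rule diff_chain_within[OF p w])
  moreover have "((\<lambda>h. inner (gw x) h) \<circ> (\<lambda>t. t *\<^sub>R (z-x))) = (*) (inner (gw x) (z - x))"
    by (auto simp: fun_eq_iff)
  ultimately have "((w \<circ> p) has_field_derivative inner (gw x) (z - x)) (at 0 within {0..1})"
    by (simp add: has_field_derivative_def)
  then have "((\<lambda>t. ((w \<circ> p) t - (w \<circ> p) 0) / (t - 0)) \<longlongrightarrow> inner (gw x) (z - x)) (at 0 within {0..1})"
    by (simp only: has_field_derivative_iff)
  then show ?thesis by (simp add: at_within_Icc_at_right p_def)
qed

lemma bregman_ge: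
  fixes X :: "'a::real_inner set"
  assumes C1: "C1_on_with_gradient X w gw" and sc: "strongly_convex_on X 1 w" and x: "x\<in>X" and z: "z\<in>X"
  shows "bregman w gw x z \<ge> (norm (z - x))\<^sup>2 / 2"
proof -
  have cX: "convex X" using sc by (simp add: strongly_convex_on_def)
  let ?q = "\<lambda>t. (w (x + t *\<^sub>R (z - x)) - w x) / t"
  let ?r = "\<lambda>t. w z - w x - (1 - t) / 2 * (norm (z - x))\<^sup>2"
  have r: "(?r \<longlongrightarrow> w z - w x - (1 - 0) / 2 * (norm (z - x))\<^sup>2) (at_right 0)"
    by (intro tendsto_intros) auto
  have ev: "eventually (\<lambda>t. ?q t \<le> ?r t) (at_right (0::real))"
  proof (rule eventually_at_rightI[of 0 1])
    fix t :: real assume "t \<in> {0<..<1}"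
    then have t: "0 < t \<and> t < 1" by auto
    have "w ((1 - t) *\<^sub>R x + t *\<^sub>R z) \<le> (1 - t) * w x + t * w z - 1 / 2 * t * (1 - t) * (norm (x - z))\<^sup>2"
      using sc x z t unfolding strongly_convex_on_def by auto
    moreover have "(1 - t) *\<^sub>R x + t *\<^sub>R z = x + t *\<^sub>R (z - x)" by (simp add: algebra_simps)
    moreover have "norm (x - z) = norm (z - x)" by (simp add: norm_minus_commute)
    ultimately have "w (x + t *\<^sub>R (z - x)) - w x \<le> t * (w z - w x - (1 - t) / 2 * (norm (z - x))\<^sup>2)"
      by (simp add: algebra_simps)
    then show "?q t \<le> ?r t" using t by (simp add: divide_le_eq mult.commute)
  qed simp
  have "inner (gw x) (z - x) \<le> w z - w x - (1 - 0) / 2 * (norm (z - x))\<^sup>2"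
    by (rule tendsto_le[OF _ r dir_deriv[OF C1 cX x z] ev]) simp
  then show ?thesis by (simp add: bregman_def)
qed

lemma three_point:
  fixes X :: "'a::real_inner set"
  assumes C1: "C1_on_with_gradient X w gw" and cX: "convex X" and x: "x\<in>X" and z: "z\<in>X"
    and P: "is_prox w gw X x y x'"
  shows "inner y (x' - z) \<le> bregman w gw x z - bregman w gw x' z - bregman w gw x x'"
proof -
  have x': "x' \<in> X" using P by (simp add: is_prox_def)
  let ?q = "\<lambda>t. (w (x' + t *\<^sub>R (z - x')) - w x') / t"
  let ?r = "\<lambda>t::real. inner (gw x - y) (z - x')"
  have ev: "eventually (\<lambda>t. ?r t \<le> ?q t) (at_right (0::real))"
  proof (rule eventually_at_rightI[of 0 1])
    fix t :: real assume "t \<in> {0<..<1}"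
    then have t: "0 < t \<and> t < 1" by auto
    have "x' + t *\<^sub>R (z - x') = (1 - t) *\<^sub>R x' + t *\<^sub>R z" by (simp add: algebra_simps)
    also have "\<dots> \<in> X" using cX x' z t by (simp add: convex_alt)
    finally have zt: "x' + t *\<^sub>R (z - x') \<in> X" .
    have "inner y x' + bregman w gw x x' \<le> inner y (x' + t *\<^sub>R (z - x')) + bregman w gw x (x' + t *\<^sub>R (z - x'))"
      using P zt by (simp add: is_prox_def)
    then have "t * inner (gw x - y) (z - x') \<le> w (x' + t *\<^sub>R (z - x')) - w x'"
      by (simp add: bregman_def algebra_simps inner_diff_right inner_add_right inner_diff_left)
    then show "?r t \<le> ?q t" using t by (simp add: le_divide_eq mult.commute)
  qed simp
  have "inner (gw x - y) (z - x') \<le> inner (gw x') (z - x')"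
    by (rule tendsto_le[OF _ dir_deriv[OF C1 cX x' z] tendsto_const ev]) simp
  then show ?thesis
    by (simp add: bregman_def algebra_simps inner_diff_right inner_diff_left)
qed

lemma prox_step:
  fixes X :: "'a::real_inner set"
  assumes C1: "C1_on_with_gradient X w gw" and sc: "strongly_convex_on X 1 w"
    and x: "x\<in>X" and u: "u\<in>X"
    and P: "is_prox w gw X x (c *\<^sub>R h) x'" and c: "c \<ge> 0"
  shows "c * inner h (x - u) \<le> bregman w gw x u - bregman w gw x' u + c\<^sup>2 * (norm h)\<^sup>2 / 2"
proof -
  have cX: "convex X" using sc by (simp add: strongly_convex_on_def)
  have x': "x' \<in> X" using P by (simp add: is_prox_def)
  have tp: "inner (c *\<^sub>R h) (x' - u) \<le> bregman w gw x u - bregman w gw x' u - bregman w gw x x'"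
    by (rule three_point[OF C1 cX x u P])
  have bg: "bregman w gw x x' \<ge> (norm (x' - x))\<^sup>2 / 2" by (rule bregman_ge[OF C1 sc x x'])
  have cs: "inner (c *\<^sub>R h) (x - x') \<le> c * norm h * norm (x' - x)"
    using Cauchy_Schwarz_ineq2[of "c *\<^sub>R h" "x - x'"] c
    by (simp add: norm_minus_commute)
  have am: "c * norm h * norm (x' - x) - (norm (x' - x))\<^sup>2 / 2 \<le> c\<^sup>2 * (norm h)\<^sup>2 / 2"
    using sum_squares_ge_zero[of "c * norm h - norm (x' - x)" 0]
    by (simp add: power2_eq_square algebra_simps)
  have "c * inner h (x - u) = inner (c *\<^sub>R h) (x' - u) + inner (c *\<^sub>R h) (x - x')"
    by (simp add: inner_diff_right algebra_simps)
  then show ?thesis using tp bg cs am by linarith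
qed

theorem mainTheorem1:
  fixes X :: "(real ^ 'n) set" and Delta :: "(real ^ 'd) set"
    and f :: "real ^ 'n \<Rightarrow> real" and g :: "real ^ 'n \<Rightarrow> real ^ 'd \<Rightarrow> real"
    and Lf LgX LgD :: real
    and w :: "real ^ 'n \<Rightarrow> real" and gw :: "real ^ 'n \<Rightarrow> real ^ 'n"
    and xstar :: "real ^ 'n"
    and N :: nat
    and x h :: "nat \<Rightarrow> real ^ 'n" and delta :: "nat \<Rightarrow> real ^ 'd"
  assumes X_convex: "convex X" and X_compact: "compact X"
    and f_convex: "convex_on X f" and f_lip: "Lf-lipschitz_on X f"
    and Delta_compact: "compact Delta" and Delta_ne: "Delta \<noteq> {}"
    and g_convex: "\<And>d. d \<in> Delta \<Longrightarrow> convex_on X (\<lambda>y. g y d)"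
    and g_lipX: "\<And>d. d \<in> Delta \<Longrightarrow> LgX-lipschitz_on X (\<lambda>y. g y d)"
    and g_lipD: "\<And>y. y \<in> X \<Longrightarrow> LgD-lipschitz_on Delta (\<lambda>d. g y d)"
    and xstar_feas: "xstar \<in> X" "Gmax g Delta xstar \<le> 0"
    and xstar_opt: "\<And>y. y \<in> X \<Longrightarrow> Gmax g Delta y \<le> 0 \<Longrightarrow> f xstar \<le> f y"
    and w_C1: "C1_on_with_gradient X w gw"
    and w_sc: "strongly_convex_on X 1 w"
    and pos: "Lf + LgX > 0" "diamD w gw X > 0"
    and N_pos: "N \<ge> 1"
    and x1: "x 1 \<in> X"
    and delta_in: "\<And>k. k \<in> {1..N} \<Longrightarrow> delta k \<in> Delta"
    and h_f: "\<And>k. k \<in> {1..N} \<Longrightarrow>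
        g (x k) (delta k) \<le> 6 * (Lf + LgX) * diamD w gw X / sqrt (real k) \<Longrightarrow>
        is_subgradient f X (x k) (h k) \<and> norm (h k) \<le> Lf"
    and h_g: "\<And>k. k \<in> {1..N} \<Longrightarrow>
        \<not> g (x k) (delta k) \<le> 6 * (Lf + LgX) * diamD w gw X / sqrt (real k) \<Longrightarrow>
        is_subgradient (\<lambda>y. g y (delta k)) X (x k) (h k) \<and> norm (h k) \<le> LgX"
    and x_step: "\<And>k. k \<in> {1..N} \<Longrightarrow>
        is_prox w gw X (x k) ((diamD w gw X / (sqrt (real k) * (Lf + LgX))) *\<^sub>R h k) (x (Suc k))"
  shows "let DX = diamD w gw X;
             L = Lf + LgX;
             eta = (\<lambda>k::nat. 6 * L * DX / sqrt (real k));
             gamma = (\<lambda>k::nat. DX / (sqrt (real k) * L));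
             s = nat \<lceil>real N / 2\<rceil>;
             B = {k \<in> {s..N}. g (x k) (delta k) \<le> eta k};
             eps = (\<lambda>k. Gmax g Delta (x k) - g (x k) (delta k));
             xbar = (\<Sum>k\<in>B. gamma k *\<^sub>R x k) /\<^sub>R (\<Sum>k\<in>B. gamma k)
         in f xbar - f xstar \<le> 6 * DX * L / sqrt (real N)
          \<and> Gmax g Delta xbar \<le> 12 * DX * L / sqrt (real N)
               + (\<Sum>k\<in>B. eps k / sqrt (real k)) / (\<Sum>k\<in>B. 1 / sqrt (real k))"
proof -
  define DX where "DX = diamD w gw X"
  define L where "L = Lf + LgX"
  define eta where "eta = (\<lambda>k::nat. 6 * L * DX / sqrt (real k))"
  define gamma where "gamma = (\<lambda>k::nat. DX / (sqrt (real k) * L))"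
  define s where "s = nat \<lceil>real N / 2\<rceil>"
  define B where "B = {k \<in> {s..N}. g (x k) (delta k) \<le> eta k}"
  define eps where "eps = (\<lambda>k. Gmax g Delta (x k) - g (x k) (delta k))"
  define xbar where "xbar = (\<Sum>k\<in>B. gamma k *\<^sub>R x k) /\<^sub>R (\<Sum>k\<in>B. gamma k)"
  define I where "I = {s..N}"
  have L0: "L > 0" and D0: "DX > 0" using pos by (auto simp: L_def DX_def)
  have Lf0: "Lf \<ge> 0" using f_lip by (simp add: lipschitz_on_def)
  obtain d0 where d0: "d0 \<in> Delta" using Delta_ne by auto
  have LgX0: "LgX \<ge> 0" using g_lipX[OF d0] by (simp add: lipschitz_on_def)
  have cX: "convex X" by (rule X_convex)
  have hnorm: "norm (h k) \<le> L" if "k \<in> {1..N}" for k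
    using h_f[OF that] h_g[OF that] Lf0 LgX0 unfolding L_def DX_def by fastforce
  have xX: "x k \<in> X" if "1 \<le> k" "k \<le> Suc N" for k
    using that
  proof (induction k)
    case 0 then show ?case by simp
  next
    case (Suc k)
    show ?case
    proof (cases "k = 0")
      case True then show ?thesis using x1 by simp
    next
      case False
      then have "k \<in> {1..N}" using Suc by auto
      then show ?thesis using x_step[of k] by (simp add: is_prox_def)
    qed
  qed
  have wc: "continuous_on X w"
    using w_C1 unfolding C1_on_with_gradient_def
    by (meson continuous_on_eq_continuous_within has_derivative_continuous)
  have gwc: "continuous_on X gw" using w_C1 by (simp add: C1_on_with_gradient_def)
  have bc: "continuous_on (X \<times> X) (\<lambda>p. bregman w gw (fst p) (snd p))"
    unfolding bregman_def
    by (intro continuous_intros continuous_on_compose2[OF wc] continuous_on_compose2[OF gwc]) auto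
  have "compact ((\<lambda>p. bregman w gw (fst p) (snd p)) ` (X \<times> X))"
    by (intro compact_continuous_image bc compact_Times X_compact)
  moreover have "(\<lambda>p. bregman w gw (fst p) (snd p)) ` (X \<times> X) = (\<lambda>(x, z). bregman w gw x z) ` (X \<times> X)"
    by (auto simp: case_prod_beta)
  ultimately have bddB: "bdd_above ((\<lambda>(x, z). bregman w gw x z) ` (X \<times> X))"
    by (metis bounded_imp_bdd_above compact_imp_bounded)
  have Sge: "Sup ((\<lambda>(x, z). bregman w gw x z) ` (X \<times> X)) \<ge> 0"
    using D0 unfolding DX_def diamD_def by (meson less_le real_sqrt_lt_0_iff not_le)
  have D2: "bregman w gw a b \<le> DX\<^sup>2" if "a \<in> X" "b \<in> X" for a b
  proof -
    have "bregman w gw a b \<le> Sup ((\<lambda>(x, z). bregman w gw x z) ` (X \<times> X))"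
      using that by (intro cSup_upper[OF _ bddB]) auto
    then show ?thesis using Sge by (simp add: DX_def diamD_def)
  qed
  have Gup: "g y d \<le> Gmax g Delta y" if "y \<in> X" "d \<in> Delta" for y d
  proof -
    have "continuous_on Delta (g y)"
      using lipschitz_on_continuous_on[OF g_lipD[OF that(1)]] by simp
    then have "bdd_above (g y ` Delta)"
      by (intro bounded_imp_bdd_above compact_imp_bounded compact_continuous_image Delta_compact)
    then show ?thesis unfolding Gmax_def using that by (intro cSup_upper) auto
  qed
  have s1: "1 \<le> s"
  proof -
    have "real N / 2 > 0" using N_pos by simp
    then have "\<lceil>real N / 2\<rceil> \<ge> 1" by (simp add: one_le_ceiling)
    then show ?thesis unfolding s_def by linarith
  qed
  have sN: "s \<le> N" using N_pos unfolding s_def by linarith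
  have s2: "real N \<le> 2 * real s" unfolding s_def by linarith
  have s3: "2 * real s \<le> real N + 1"
  proof -
    define c where "c = \<lceil>real N / 2\<rceil>"
    have "real_of_int c < real N / 2 + 1" unfolding c_def by linarith
    then have "real_of_int (2 * c) < real_of_int (int N + 2)" by simp
    then have "2 * c < int N + 2" by (simp only: of_int_less_iff)
    then have "2 * c \<le> int N + 1" by simp
    moreover have "c \<ge> 0" unfolding c_def by simp
    ultimately show ?thesis unfolding s_def c_def[symmetric] by linarith
  qed
  have Ifin: "finite I" by (simp add: I_def)
  have BI: "B \<subseteq> I" by (auto simp: B_def I_def)
  have Bfin: "finite B" using Ifin BI finite_subset by blast
  have kI: "1 \<le> k \<and> k \<le> N \<and> real N \<le> 2 * real k" if "k \<in> I" for k
    using that s1 s2 unfolding I_def by auto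
  have gam_pos: "gamma k > 0" if "k \<ge> 1" for k
    using that L0 D0 by (simp add: gamma_def)
  have gam_eta: "gamma k * eta k = 6 * DX\<^sup>2 / real k" if "k \<ge> 1" for k
    using that L0 by (simp add: gamma_def eta_def power2_eq_square field_simps)
  have gam_sq: "(gamma k)\<^sup>2 * L\<^sup>2 = DX\<^sup>2 / real k" if "k \<ge> 1" for k
    using that L0 by (simp add: gamma_def power2_eq_square field_simps)
  define V where "V = (\<lambda>k. bregman w gw (x k) xstar)"
  have step: "gamma k * inner (h k) (x k - xstar) \<le> V k - V (Suc k) + DX\<^sup>2 / (2 * real k)"
    if k: "k \<in> I" for k
  proof -
    have k1: "k \<in> {1..N}" using kI[OF k] by auto
    have xk: "x k \<in> X" using kI[OF k] by (intro xX) auto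
    have P: "is_prox w gw X (x k) (gamma k *\<^sub>R h k) (x (Suc k))"
      using x_step[OF k1] by (simp add: gamma_def DX_def L_def)
    have "gamma k * inner (h k) (x k - xstar) \<le> V k - V (Suc k) + (gamma k)\<^sup>2 * (norm (h k))\<^sup>2 / 2"
      unfolding V_def
      by (rule prox_step[OF w_C1 w_sc xk xstar_feas(1) P]) (use gam_pos[of k] kI[OF k] in auto)
    moreover have "(gamma k)\<^sup>2 * (norm (h k))\<^sup>2 \<le> (gamma k)\<^sup>2 * L\<^sup>2"
      using hnorm[OF k1] by (intro mult_left_mono power_mono) auto
    ultimately show ?thesis using gam_sq kI[OF k] by simp
  qed
  define S where "S = (\<Sum>k\<in>I. 1 / real k)"
  have sumU: "(\<Sum>k\<in>I. gamma k * inner (h k) (x k - xstar)) \<le> DX\<^sup>2 + DX\<^sup>2 / 2 * S"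
  proof -
    have "(\<Sum>k\<in>I. gamma k * inner (h k) (x k - xstar)) \<le> (\<Sum>k\<in>I. (V k - V (Suc k)) + DX\<^sup>2 / 2 * (1 / real k))"
      using step by (intro sum_mono) simp
    also have "\<dots> = (\<Sum>k\<in>I. V k - V (Suc k)) + DX\<^sup>2 / 2 * S"
      by (simp add: sum.distrib sum_distrib_left S_def)
    also have "(\<Sum>k\<in>I. V k - V (Suc k)) = V s - V (Suc N)"
      using sum_Suc_diff[of s N "\<lambda>i. - V i"] sN unfolding I_def by simp
    finally have A: "(\<Sum>k\<in>I. gamma k * inner (h k) (x k - xstar)) \<le> V s - V (Suc N) + DX\<^sup>2 / 2 * S" .
    have "V s \<le> DX\<^sup>2" unfolding V_def using s1 sN by (intro D2 xX xstar_feas(1)) auto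
    moreover have "V (Suc N) \<ge> 0" unfolding V_def
      using bregman_ge[OF w_C1 w_sc xX[of "Suc N"] xstar_feas(1)] zero_le_power2[of "norm (xstar - x (Suc N))"] by linarith
    ultimately show ?thesis using A by linarith
  qed
  define lb where "lb = (\<lambda>k. if k \<in> B then gamma k * (f (x k) - f xstar) else 6 * DX\<^sup>2 * (1 / real k))"
  have lbk: "lb k \<le> gamma k * inner (h k) (x k - xstar)" if k: "k \<in> I" for k
  proof -
    have k1: "k \<in> {1..N}" using kI[OF k] by auto
    have xk: "x k \<in> X" using kI[OF k] by (intro xX) auto
    show ?thesis
    proof (cases "k \<in> B")
      case True
      then have "g (x k) (delta k) \<le> 6 * (Lf + LgX) * diamD w gw X / sqrt (real k)"
        by (simp add: B_def eta_def L_def DX_def)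
      then have "is_subgradient f X (x k) (h k)" using h_f[OF k1] by blast
      then have "f xstar \<ge> f (x k) + inner (h k) (xstar - x k)"
        using xstar_feas(1) by (simp add: is_subgradient_def)
      then have "f (x k) - f xstar \<le> inner (h k) (x k - xstar)"
        by (simp add: inner_diff_right)
      then show ?thesis using True gam_pos kI[OF k] by (simp add: lb_def)
    next
      case False
      then have nb: "\<not> g (x k) (delta k) \<le> 6 * (Lf + LgX) * diamD w gw X / sqrt (real k)"
        using k by (simp add: B_def eta_def L_def DX_def I_def)
      then have "is_subgradient (\<lambda>y. g y (delta k)) X (x k) (h k)" using h_g[OF k1] by blast
      then have "g xstar (delta k) \<ge> g (x k) (delta k) + inner (h k) (xstar - x k)"
        using xstar_feas(1) by (simp add: is_subgradient_def)
      moreover have "g xstar (delta k) \<le> 0"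
        using Gup[OF xstar_feas(1) delta_in[OF k1]] xstar_feas(2) by linarith
      ultimately have "eta k \<le> inner (h k) (x k - xstar)"
        using nb by (simp add: inner_diff_right eta_def L_def DX_def)
      then have "gamma k * eta k \<le> gamma k * inner (h k) (x k - xstar)"
        using gam_pos kI[OF k] by simp
      then show ?thesis using False gam_eta kI[OF k] by (simp add: lb_def)
    qed
  qed
  define P where "P = (\<Sum>k\<in>B. gamma k * (f (x k) - f xstar))"
  define TB where "TB = (\<Sum>k\<in>B. 1 / real k)"
  define TN where "TN = (\<Sum>k\<in>I - B. 1 / real k)"
  have lbsum: "(\<Sum>k\<in>I. lb k) = P + 6 * DX\<^sup>2 * TN"
  proof -
    have "(\<Sum>k\<in>I. lb k) = (\<Sum>k\<in>I \<inter> {k. k \<in> B}. gamma k * (f (x k) - f xstar)) + (\<Sum>k\<in>I \<inter> - {k. k \<in> B}. 6 * DX\<^sup>2 * (1 / real k))"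
      unfolding lb_def by (rule sum.If_cases[OF Ifin])
    moreover have "I \<inter> {k. k \<in> B} = B" using BI by auto
    moreover have "I \<inter> - {k. k \<in> B} = I - B" by auto
    ultimately show ?thesis by (simp add: P_def TN_def sum_distrib_left)
  qed
  have MAIN: "P + 6 * DX\<^sup>2 * TN \<le> DX\<^sup>2 + DX\<^sup>2 / 2 * S"
    using sum_mono[of I lb "\<lambda>k. gamma k * inner (h k) (x k - xstar)"] lbk sumU lbsum by simp
  have SBN: "S = TB + TN"
    unfolding S_def TB_def TN_def using sum.subset_diff[OF BI Ifin, of "\<lambda>k. 1 / real k"] by simp
  define r where "r = (\<lambda>k::nat. 1 / (sqrt (real k) * sqrt (real N)))"
  define RI where "RI = (\<Sum>k\<in>I. r k)"
  define RB where "RB = (\<Sum>k\<in>B. r k)"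
  have rk: "r k \<le> 1 / real k" "r k \<ge> 0" if "k \<in> I" for k
  proof -
    have "sqrt (real k) * sqrt (real k) \<le> sqrt (real k) * sqrt (real N)"
      using kI[OF that] by (intro mult_left_mono) auto
    then have "real k \<le> sqrt (real k) * sqrt (real N)" by simp
    then show "r k \<le> 1 / real k" using kI[OF that] unfolding r_def
      by (intro divide_left_mono) auto
    show "r k \<ge> 0" unfolding r_def by simp
  qed
  have K2: "TB - RB \<le> S - RI"
  proof -
    have "(\<Sum>k\<in>B. 1 / real k - r k) \<le> (\<Sum>k\<in>I. 1 / real k - r k)"
      using rk by (intro sum_mono2[OF Ifin BI]) auto
    then show ?thesis by (simp add: sum_subtractf TB_def RB_def S_def RI_def)
  qed
  have RS: "RI \<le> S" unfolding RI_def S_def using rk by (intro sum_mono) auto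
  have K1: "1 + S / 2 - 6 * RI \<le> -1"
  proof -
    have tm: "5 / real N \<le> 6 * r k - 1 / 2 * (1 / real k)" if "k \<in> I" for k
    proof -
      have k: "1 \<le> k" "k \<le> N" "real N \<le> 2 * real k" using kI[OF that] by auto
      have "sqrt (real k) * sqrt (real N) \<le> sqrt (real N) * sqrt (real N)"
        using k by (intro mult_right_mono) auto
      then have "sqrt (real k) * sqrt (real N) \<le> real N" by simp
      then have a: "1 / real N \<le> r k" unfolding r_def using k
        by (intro divide_left_mono) auto
      have b: "1 / 2 * (1 / real k) \<le> 1 / real N" using k by (simp add: field_simps)
      have c: "5 / real N = 6 * (1 / real N) - 1 / real N" by simp
      show ?thesis using a b c by linarith
    qed
    have "(\<Sum>k\<in>I. 5 / real N) \<le> (\<Sum>k\<in>I. 6 * r k - 1 / 2 * (1 / real k))"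
      using tm by (intro sum_mono) auto
    moreover have "(\<Sum>k\<in>I. 6 * r k - 1 / 2 * (1 / real k)) = 6 * RI - S / 2"
      unfolding RI_def S_def by (simp only: sum_subtractf sum_distrib_left[symmetric])
    moreover have "(\<Sum>k\<in>I. 5 / real N) = real (card I) * 5 / real N" by simp
    moreover have "real (card I) * 5 / real N \<ge> 2"
    proof -
      have "real (card I) = real N + 1 - real s" using sN unfolding I_def by simp
      then show ?thesis using s3 N_pos by (simp add: field_simps)
    qed
    ultimately show ?thesis by linarith
  qed
  define Pn where "Pn = P / DX\<^sup>2"
  have MAINn: "Pn + 6 * TN \<le> 1 + S / 2"
  proof -
    have "P + 6 * DX\<^sup>2 * TN = DX\<^sup>2 * (Pn + 6 * TN)" using D0 by (simp add: Pn_def field_simps)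
    moreover have "DX\<^sup>2 + DX\<^sup>2 / 2 * S = DX\<^sup>2 * (1 + S / 2)" by (simp add: field_simps)
    ultimately show ?thesis using MAIN D0 by simp
  qed
  have Bne: "B \<noteq> {}"
  proof
    assume "B = {}"
    then have "P = 0" "TB = 0" by (simp_all add: P_def TB_def)
    then show False using MAINn SBN K1 RS by (simp add: Pn_def)
  qed
  have Pn_le: "Pn \<le> 6 * RB" using MAINn SBN K1 K2 by linarith
  define SB where "SB = (\<Sum>k\<in>B. 1 / sqrt (real k))"
  define Gam where "Gam = (\<Sum>k\<in>B. gamma k)"
  have kB: "1 \<le> k \<and> k \<le> N \<and> real N \<le> 2 * real k" if "k \<in> B" for k
    using kI BI that by blast
  have Gam_eq: "Gam = DX / L * SB"
    unfolding Gam_def SB_def gamma_def sum_distrib_left by (rule sum.cong) auto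
  have RB_eq: "RB = SB / sqrt (real N)"
    unfolding RB_def SB_def r_def sum_divide_distrib by (rule sum.cong) auto
  have SBpos: "SB > 0" unfolding SB_def using Bfin Bne kB
    by (intro sum_pos) auto
  have Gampos: "Gam > 0" using Gam_eq SBpos D0 L0 by simp
  define a where "a = (\<lambda>k. gamma k / Gam)"
  have xbar_eq: "xbar = (\<Sum>k\<in>B. a k *\<^sub>R x k)"
    unfolding xbar_def a_def Gam_def[symmetric] by (simp add: scaleR_sum_right divide_inverse mult.commute)
  have asum: "(\<Sum>k\<in>B. a k) = 1" unfolding a_def using Gampos
    by (simp add: sum_divide_distrib[symmetric] Gam_def)
  have anon: "a k \<ge> 0" if "k \<in> B" for k
    using gam_pos[of k] kB[OF that] Gampos unfolding a_def by simp
  have xBX: "x k \<in> X" if "k \<in> B" for k using kB[OF that] by (intro xX) auto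
  have F1: "f xbar \<le> (\<Sum>k\<in>B. a k * f (x k))"
    unfolding xbar_eq by (rule convex_on_sum[OF Bfin Bne f_convex asum anon xBX])
  have F2: "(\<Sum>k\<in>B. a k * f (x k)) - f xstar = P / Gam"
  proof -
    have "(\<Sum>k\<in>B. a k * (f (x k) - f xstar)) = P / Gam"
      unfolding a_def P_def by (simp add: sum_divide_distrib)
    moreover have "(\<Sum>k\<in>B. a k * (f (x k) - f xstar)) = (\<Sum>k\<in>B. a k * f (x k)) - f xstar"
      using asum by (simp add: right_diff_distrib sum_subtractf sum_distrib_right[symmetric])
    ultimately show ?thesis by simp
  qed
  have F3: "P \<le> 6 * DX * L / sqrt (real N) * Gam"
  proof -
    have "P = DX\<^sup>2 * Pn" using D0 by (simp add: Pn_def)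
    also have "\<dots> \<le> DX\<^sup>2 * (6 * RB)" using Pn_le by (intro mult_left_mono) auto
    also have "\<dots> = 6 * DX * L / sqrt (real N) * Gam"
      using L0 by (simp add: RB_eq Gam_eq power2_eq_square field_simps)
    finally show ?thesis .
  qed
  have Fbound: "f xbar - f xstar \<le> 6 * DX * L / sqrt (real N)"
  proof -
    have "P / Gam \<le> 6 * DX * L / sqrt (real N)" using F3 Gampos by (simp add: divide_le_eq)
    then show ?thesis using F1 F2 by linarith
  qed
  have G1: "Gmax g Delta xbar \<le> (\<Sum>k\<in>B. a k * Gmax g Delta (x k))"
    unfolding Gmax_def[of g Delta xbar]
  proof (rule cSUP_least[OF Delta_ne])
    fix d assume d: "d \<in> Delta"
    have "g xbar d \<le> (\<Sum>k\<in>B. a k * g (x k) d)"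
      unfolding xbar_eq by (rule convex_on_sum[OF Bfin Bne g_convex[OF d] asum anon xBX])
    also have "\<dots> \<le> (\<Sum>k\<in>B. a k * Gmax g Delta (x k))"
      using anon Gup[OF xBX d] by (intro sum_mono mult_left_mono) auto
    finally show "g xbar d \<le> (\<Sum>k\<in>B. a k * Gmax g Delta (x k))" .
  qed
  have G2: "(\<Sum>k\<in>B. a k * Gmax g Delta (x k)) \<le> (\<Sum>k\<in>B. a k * eta k) + (\<Sum>k\<in>B. a k * eps k)"
  proof -
    have "(\<Sum>k\<in>B. a k * Gmax g Delta (x k)) \<le> (\<Sum>k\<in>B. a k * eta k + a k * eps k)"
    proof (intro sum_mono)
      fix k assume k: "k \<in> B"
      have "Gmax g Delta (x k) \<le> eta k + eps k" using k by (simp add: B_def eps_def)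
      then have "a k * Gmax g Delta (x k) \<le> a k * (eta k + eps k)" using anon[OF k] by (rule mult_left_mono)
      then show "a k * Gmax g Delta (x k) \<le> a k * eta k + a k * eps k" by (simp add: distrib_left)
    qed
    then show ?thesis by (simp add: sum.distrib)
  qed
  have G3: "(\<Sum>k\<in>B. a k * eps k) = (\<Sum>k\<in>B. eps k / sqrt (real k)) / (\<Sum>k\<in>B. 1 / sqrt (real k))"
  proof -
    have "(\<Sum>k\<in>B. a k * eps k) = (\<Sum>k\<in>B. DX / L * (eps k / sqrt (real k))) / Gam"
      unfolding a_def gamma_def sum_divide_distrib by (rule sum.cong) auto
    also have "\<dots> = DX / L * (\<Sum>k\<in>B. eps k / sqrt (real k)) / (DX / L * SB)"
      by (simp add: sum_distrib_left Gam_eq)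
    also have "\<dots> = (\<Sum>k\<in>B. eps k / sqrt (real k)) / SB" using D0 L0 by simp
    finally show ?thesis by (simp add: SB_def)
  qed
  have G4: "(\<Sum>k\<in>B. a k * eta k) \<le> 12 * DX * L / sqrt (real N)"
  proof -
    have "(\<Sum>k\<in>B. a k * eta k) = (\<Sum>k\<in>B. 6 * DX\<^sup>2 / real k) / Gam"
      unfolding a_def sum_divide_distrib using gam_eta kB by (intro sum.cong) auto
    moreover have "(\<Sum>k\<in>B. 6 * DX\<^sup>2 / real k) \<le> (\<Sum>k\<in>B. 12 * DX\<^sup>2 / sqrt (real N) * (1 / sqrt (real k)))"
    proof (intro sum_mono)
      fix k assume k: "k \<in> B"
      have k1: "1 \<le> k" "real N \<le> 2 * real k" using kB[OF k] by auto
      have "sqrt (real N) * sqrt (real k) = sqrt (real N * real k)" by (simp add: real_sqrt_mult)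
      also have "\<dots> \<le> sqrt ((2 * real k)\<^sup>2)"
        using k1 unfolding power2_eq_square by (intro real_sqrt_le_mono) (auto intro: mult_mono)
      also have "\<dots> = 2 * real k" by (simp only: real_sqrt_abs)
      finally have sk: "sqrt (real N) * sqrt (real k) \<le> 2 * real k" .
      have pN: "sqrt (real N) > 0" using N_pos by simp
      have pk: "sqrt (real k) > 0" using k1 by simp
      have "6 / real k \<le> 12 / (sqrt (real N) * sqrt (real k))"
        using sk pN pk k1 by (simp add: field_simps)
      then have "DX\<^sup>2 * (6 / real k) \<le> DX\<^sup>2 * (12 / (sqrt (real N) * sqrt (real k)))"
        by (intro mult_left_mono) auto
      then show "6 * DX\<^sup>2 / real k \<le> 12 * DX\<^sup>2 / sqrt (real N) * (1 / sqrt (real k))"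
        by (simp add: mult.commute)
    qed
    moreover have "(\<Sum>k\<in>B. 12 * DX\<^sup>2 / sqrt (real N) * (1 / sqrt (real k))) = 12 * DX\<^sup>2 / sqrt (real N) * SB"
      unfolding SB_def by (simp only: sum_distrib_left)
    moreover have "12 * DX\<^sup>2 / sqrt (real N) * SB = 12 * DX * L / sqrt (real N) * Gam"
      using L0 unfolding Gam_eq by (simp add: power2_eq_square)
    ultimately have "(\<Sum>k\<in>B. a k * eta k) = (\<Sum>k\<in>B. 6 * DX\<^sup>2 / real k) / Gam"
       and "(\<Sum>k\<in>B. 6 * DX\<^sup>2 / real k) \<le> 12 * DX * L / sqrt (real N) * Gam" by linarith+
    then show ?thesis using Gampos by (simp add: pos_divide_le_eq)
  qed
  have main: "f xbar - f xstar \<le> 6 * DX * L / sqrt (real N)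
          \<and> Gmax g Delta xbar \<le> 12 * DX * L / sqrt (real N)
               + (\<Sum>k\<in>B. eps k / sqrt (real k)) / (\<Sum>k\<in>B. 1 / sqrt (real k))"
    using Fbound G1 G2 G3 G4 by linarith
  show ?thesis unfolding Let_def
    using main unfolding DX_def L_def eta_def gamma_def s_def B_def eps_def xbar_def .
qed

end
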